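(* Consider the perturbed federated algorithm described in the context, with $\beta\in(0,1)$. Assume that the bounded variance, bounded stochastic gradient norm and $L$-smoothness assumptions hold. Then for every round $t\ge0$ and every pair of clients $i,j$, $$\mathbb{E}\|\mathbf{u}^i_t-\mathbf{u}^j_t\|^2\le\mathbb{1}_{t\ge1}\,4\gamma_{t-1}^2E^2G^2.$$
   Context: Setting: there are $C$ clients with local objectives $F_i:\mathbb{R}^D\to\mathbb{R}$. Similarity weights $p_{in}\ge0$ are symmetric, satisfy $p_{ii}=0$, and $\sum_{i,n}p_{in}=1$. Let $p_i=\sum_np_{in}>0$. Algorithm, with parameter $\beta$, $E\ge1$ local steps and step sizes $\gamma_t$, all clients participating: - $\mathbf{u}^i_0=\overline{\mathbf{w}}_{0,0}$. - In round $t$, $\mathbf{w}^i_{t,0}=\overline{\mathbf{w}}_{t,0}$. For $k=0,\dots,E-1$, $\widetilde{\mathbf{w}}^i_{t,k}=\beta\mathbf{w}^i_{t,k}+(1-\beta)\mathbf{u}^i_t$ and $\mathbf{w}^i_{t,k+1}=\mathbf{w}^i_{t,k}-\gamma_tg_i(\widetilde{\mathbf{w}}^i_{t,k})$, with stochastic gradients $g_i$ of $F_i$ sampled independently given the past. - $\overline{\mathbf{w}}_{t,k}=\sum_ip_i\mathbf{w}^i_{t,k}$ and $\overline{\mathbf{w}}_{t+1,0}=\overline{\mathbf{w}}_{t,E}$. - For $t\ge1$, $\mathbf{u}^i_t=\frac1{p_i}\sum_np_{in}\mathbf{w}^n_{t-1,E}$. Assumptions: - Unbiasedness: $\mathbb{E}\,g_i(\widetilde{\mathbf{w}}^i_{t,k})=\nabla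 F_i(\widetilde{\mathbf{w}}^i_{t,k})$. - Variance: $\mathbb{E}\|g_i(\widetilde{\mathbf{w}}^i_{t,k})-\nabla F_i(\widetilde{\mathbf{w}}^i_{t,k})\|^2\le\sigma^2$. - Bounded second moment: $\mathbb{E}\|g_i(\widetilde{\mathbf{w}}^i_{t,k})\|^2\le G^2$. - Each $\nabla F_i$ is $L$-Lipschitz. $\mathbb{E}$ is total expectation. *)

theory Defs
  imports "HOL-Analysis.Analysis" "HOL-Probability.Probability"
begin

text \<open>Clients are indexed by 0..C-1. p i n are the similarity weights,
  pbar p C i = p_i = sum_n p_in.\<close>

definition pbar :: "(nat \<Rightarrow> nat \<Rightarrow> real) \<Rightarrow> nat \<Rightarrow> nat \<Rightarrow> real" where
  "pbar p C i = (\<Sum>n<C. p i n)"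

definition avg_w :: "(nat \<Rightarrow> nat \<Rightarrow> real) \<Rightarrow> nat \<Rightarrow> (nat \<Rightarrow> 'a::real_vector) \<Rightarrow> 'a" where
  "avg_w p C W = (\<Sum>i<C. pbar p C i *\<^sub>R W i)"

definition anchor :: "(nat \<Rightarrow> nat \<Rightarrow> real) \<Rightarrow> nat \<Rightarrow> (nat \<Rightarrow> 'a::real_vector) \<Rightarrow> nat \<Rightarrow> 'a" where
  "anchor p C W i = (1 / pbar p C i) *\<^sub>R (\<Sum>n<C. p i n *\<^sub>R W n)"

text \<open>Local run of one client within one round: start point ws, anchor u,
  step size gam, stochastic gradient oracle gr k x (for local step k at point x).
  local_w ... k = w_{t,k}.\<close>
primrec local_w :: "real \<Rightarrow> real \<Rightarrow> (nat \<Rightarrow> 'a \<Rightarrow> 'a) \<Rightarrow> 'a \<Rightarrow> 'a \<Rightarrow> nat \<Rightarrow> 'a::real_vector" where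
  "local_w beta gam gr ws u 0 = ws"
| "local_w beta gam gr ws u (Suc k) =
     local_w beta gam gr ws u k
       - gam *\<^sub>R gr k (beta *\<^sub>R local_w beta gam gr ws u k + (1 - beta) *\<^sub>R u)"

text \<open>For a fixed realisation of the randomness, g i t k x is the stochastic
  gradient of F_i returned at point x in local step k of round t.
  last_iters ... t i = w^i_{t,E}.\<close>
primrec last_iters :: "(nat \<Rightarrow> nat \<Rightarrow> real) \<Rightarrow> nat \<Rightarrow> real \<Rightarrow> nat \<Rightarrow> (nat \<Rightarrow> real)
    \<Rightarrow> (nat \<Rightarrow> nat \<Rightarrow> nat \<Rightarrow> 'a \<Rightarrow> 'a) \<Rightarrow> 'a \<Rightarrow> nat \<Rightarrow> nat \<Rightarrow> 'a::real_vector" where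
  "last_iters p C beta E gamma g w0 0 =
     (\<lambda>i. local_w beta (gamma 0) (g i 0) w0 w0 E)"
| "last_iters p C beta E gamma g w0 (Suc t) =
     (\<lambda>i. local_w beta (gamma (Suc t)) (g i (Suc t))
            (avg_w p C (last_iters p C beta E gamma g w0 t))
            (anchor p C (last_iters p C beta E gamma g w0 t) i) E)"

definition u_fed :: "(nat \<Rightarrow> nat \<Rightarrow> real) \<Rightarrow> nat \<Rightarrow> real \<Rightarrow> nat \<Rightarrow> (nat \<Rightarrow> real)
    \<Rightarrow> (nat \<Rightarrow> nat \<Rightarrow> nat \<Rightarrow> 'a \<Rightarrow> 'a) \<Rightarrow> 'a \<Rightarrow> nat \<Rightarrow> nat \<Rightarrow> 'a::real_vector" where
  "u_fed p C beta E gamma g w0 t i =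
     (if t = 0 then w0 else anchor p C (last_iters p C beta E gamma g w0 (t - 1)) i)"

definition wbar_fed :: "(nat \<Rightarrow> nat \<Rightarrow> real) \<Rightarrow> nat \<Rightarrow> real \<Rightarrow> nat \<Rightarrow> (nat \<Rightarrow> real)
    \<Rightarrow> (nat \<Rightarrow> nat \<Rightarrow> nat \<Rightarrow> 'a \<Rightarrow> 'a) \<Rightarrow> 'a \<Rightarrow> nat \<Rightarrow> 'a::real_vector" where
  "wbar_fed p C beta E gamma g w0 t =
     (if t = 0 then w0 else avg_w p C (last_iters p C beta E gamma g w0 (t - 1)))"

definition w_fed :: "(nat \<Rightarrow> nat \<Rightarrow> real) \<Rightarrow> nat \<Rightarrow> real \<Rightarrow> nat \<Rightarrow> (nat \<Rightarrow> real)
    \<Rightarrow> (nat \<Rightarrow> nat \<Rightarrow> nat \<Rightarrow> 'a \<Rightarrow> 'a) \<Rightarrow> 'a \<Rightarrow> nat \<Rightarrow> nat \<Rightarrow> nat \<Rightarrow> 'a::real_vector" where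
  "w_fed p C beta E gamma g w0 t k i =
     local_w beta (gamma t) (g i t) (wbar_fed p C beta E gamma g w0 t)
       (u_fed p C beta E gamma g w0 t i) k"

definition wt_fed :: "(nat \<Rightarrow> nat \<Rightarrow> real) \<Rightarrow> nat \<Rightarrow> real \<Rightarrow> nat \<Rightarrow> (nat \<Rightarrow> real)
    \<Rightarrow> (nat \<Rightarrow> nat \<Rightarrow> nat \<Rightarrow> 'a \<Rightarrow> 'a) \<Rightarrow> 'a \<Rightarrow> nat \<Rightarrow> nat \<Rightarrow> nat \<Rightarrow> 'a::real_vector" where
  "wt_fed p C beta E gamma g w0 t k i =
     beta *\<^sub>R w_fed p C beta E gamma g w0 t k i + (1 - beta) *\<^sub>R u_fed p C beta E gamma g w0 t i"

end

theory Submission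
  imports Defs
begin


lemma local_w_closed:
  "local_w beta gam gr ws u K =
     ws - gam *\<^sub>R (\<Sum>k<K. gr k (beta *\<^sub>R local_w beta gam gr ws u k + (1 - beta) *\<^sub>R u))"
  by (induction K) (simp_all add: algebra_simps)

lemma last_iters_eq:
  "last_iters p C beta E gamma G w0 s n =
     local_w beta (gamma s) (G n s) (wbar_fed p C beta E gamma G w0 s) (u_fed p C beta E gamma G w0 s n) E"
  by (cases s) (simp_all add: wbar_fed_def u_fed_def)

lemma wcs:
  fixes w a :: "'i \<Rightarrow> real"
  assumes "\<forall>x\<in>A. w x \<ge> 0"
  shows "(\<Sum>x\<in>A. w x * a x)\<^sup>2 \<le> (\<Sum>x\<in>A. w x) * (\<Sum>x\<in>A. w x * (a x)\<^sup>2)"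
proof -
  have "(\<Sum>x\<in>A. sqrt (w x) * (sqrt (w x) * a x))\<^sup>2
        \<le> (\<Sum>x\<in>A. (sqrt (w x))\<^sup>2) * (\<Sum>x\<in>A. (sqrt (w x) * a x)\<^sup>2)"
    by (rule Cauchy_Schwarz_ineq_sum)
  moreover have "(\<Sum>x\<in>A. sqrt (w x) * (sqrt (w x) * a x)) = (\<Sum>x\<in>A. w x * a x)"
    using assms by (intro sum.cong) (auto simp flip: mult.assoc)
  moreover have "(\<Sum>x\<in>A. (sqrt (w x))\<^sup>2) = (\<Sum>x\<in>A. w x)"
    using assms by (intro sum.cong) auto
  moreover have "(\<Sum>x\<in>A. (sqrt (w x) * a x)\<^sup>2) = (\<Sum>x\<in>A. w x * (a x)\<^sup>2)"
    using assms by (intro sum.cong) (auto simp: power_mult_distrib)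
  ultimately show ?thesis by simp
qed

lemma anchor_dev:
  assumes "pbar p C i > 0"
  shows "anchor p C X i - W = (1 / pbar p C i) *\<^sub>R (\<Sum>n<C. p i n *\<^sub>R (X n - W))"
proof -
  have "(\<Sum>n<C. p i n *\<^sub>R (X n - W)) = (\<Sum>n<C. p i n *\<^sub>R X n) - pbar p C i *\<^sub>R W"
    by (simp add: scaleR_diff_right sum_subtractf pbar_def scaleR_sum_left)
  then show ?thesis using assms
    by (simp add: anchor_def scaleR_diff_right)
qed

lemma anchor_norm:
  assumes "pbar p C i > 0" and "\<And>n. n < C \<Longrightarrow> p i n \<ge> 0"
  shows "(norm (anchor p C X i - W))\<^sup>2 \<le> (1 / pbar p C i) * (\<Sum>n<C. p i n * (norm (X n - W))\<^sup>2)"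
proof -
  let ?b = "pbar p C i"
  have "norm (anchor p C X i - W) = (1 / ?b) * norm (\<Sum>n<C. p i n *\<^sub>R (X n - W))"
    using assms by (simp add: anchor_dev)
  also have "\<dots> \<le> (1 / ?b) * (\<Sum>n<C. p i n * norm (X n - W))"
  proof -
    have "norm (\<Sum>n<C. p i n *\<^sub>R (X n - W)) \<le> (\<Sum>n<C. norm (p i n *\<^sub>R (X n - W)))"
      by (rule norm_sum)
    also have "\<dots> = (\<Sum>n<C. p i n * norm (X n - W))"
      using assms(2) by (intro sum.cong) auto
    finally show ?thesis using assms(1) by (simp add: divide_right_mono)
  qed
  finally have 1: "norm (anchor p C X i - W) \<le> (1 / ?b) * (\<Sum>n<C. p i n * norm (X n - W))" .
  have "(norm (anchor p C X i - W))\<^sup>2 \<le> ((1 / ?b) * (\<Sum>n<C. p i n * norm (X n - W)))\<^sup>2"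
    using 1 by (intro power_mono) auto
  also have "\<dots> = (1 / ?b)\<^sup>2 * (\<Sum>n<C. p i n * norm (X n - W))\<^sup>2"
    by (simp add: power_divide)
  also have "\<dots> \<le> (1 / ?b)\<^sup>2 * (?b * (\<Sum>n<C. p i n * (norm (X n - W))\<^sup>2))"
    using wcs[of "{..<C}" "p i" "\<lambda>n. norm (X n - W)"] assms
    by (intro mult_left_mono) (auto simp: pbar_def)
  also have "\<dots> = (1 / ?b) * (\<Sum>n<C. p i n * (norm (X n - W))\<^sup>2)"
    using assms(1) by (simp add: power2_eq_square)
  finally show ?thesis .
qed

lemma norm_diff_sq:
  fixes a b :: "'a::real_normed_vector"
  shows "(norm (a - b))\<^sup>2 \<le> 2 * (norm a)\<^sup>2 + 2 * (norm b)\<^sup>2"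
proof -
  have "(norm (a - b))\<^sup>2 \<le> (norm a + norm b)\<^sup>2"
    by (intro power_mono norm_triangle_ineq4) auto
  also have "\<dots> \<le> 2 * (norm a)\<^sup>2 + 2 * (norm b)\<^sup>2"
  proof -
    have "0 \<le> (norm a - norm b)\<^sup>2" by simp
    then show ?thesis unfolding power2_diff power2_sum by linarith
  qed
  finally show ?thesis .
qed

lemma norm_diff_sq2:
  fixes a b W :: "'a::real_normed_vector"
  shows "(norm (a - b))\<^sup>2 \<le> 2 * (norm (a - W))\<^sup>2 + 2 * (norm (b - W))\<^sup>2"
  using norm_diff_sq[of "a - W" "b - W"] by simp

theorem lemma6:
  fixes M :: "'w measure"
    and C E :: nat and p :: "nat \<Rightarrow> nat \<Rightarrow> real" and beta L sig G :: real
    and gamma :: "nat \<Rightarrow> real"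
    and F :: "nat \<Rightarrow> 'a::euclidean_space \<Rightarrow> real" and gradF :: "nat \<Rightarrow> 'a \<Rightarrow> 'a"
    and g :: "nat \<Rightarrow> nat \<Rightarrow> nat \<Rightarrow> 'a \<Rightarrow> 'w \<Rightarrow> 'a"
    and w0 :: 'a
  assumes M: "prob_space M"
    and p_nonneg: "\<And>i n. i < C \<Longrightarrow> n < C \<Longrightarrow> p i n \<ge> 0"
    and p_sym: "\<And>i n. i < C \<Longrightarrow> n < C \<Longrightarrow> p i n = p n i"
    and p_diag: "\<And>i. i < C \<Longrightarrow> p i i = 0"
    and p_sum: "(\<Sum>i<C. \<Sum>n<C. p i n) = 1"
    and p_pos: "\<And>i. i < C \<Longrightarrow> pbar p C i > 0"
    and beta: "0 < beta" "beta < 1"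
    and E: "E \<ge> 1"
    and grad: "\<And>i x. i < C \<Longrightarrow> (F i has_derivative (\<lambda>h. gradF i x \<bullet> h)) (at x)"
    and smooth: "\<And>i. i < C \<Longrightarrow> L-lipschitz_on UNIV (gradF i)"
    and meas: "\<And>i t k. i < C \<Longrightarrow> k < E \<Longrightarrow>
        (\<lambda>\<omega>. g i t k (wt_fed p C beta E gamma (\<lambda>i t k x. g i t k x \<omega>) w0 t k i) \<omega>)
          \<in> borel_measurable M"
    and var: "\<And>i t k. i < C \<Longrightarrow> k < E \<Longrightarrow>
        integrable M (\<lambda>\<omega>. (norm (g i t k (wt_fed p C beta E gamma (\<lambda>i t k x. g i t k x \<omega>) w0 t k i) \<omega>
             - gradF i (wt_fed p C beta E gamma (\<lambda>i t k x. g i t k x \<omega>) w0 t k i)))\<^sup>2)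
        \<and> (\<integral>\<omega>. (norm (g i t k (wt_fed p C beta E gamma (\<lambda>i t k x. g i t k x \<omega>) w0 t k i) \<omega>
             - gradF i (wt_fed p C beta E gamma (\<lambda>i t k x. g i t k x \<omega>) w0 t k i)))\<^sup>2 \<partial>M) \<le> sig\<^sup>2"
    and second: "\<And>i t k. i < C \<Longrightarrow> k < E \<Longrightarrow>
        integrable M (\<lambda>\<omega>. (norm (g i t k (wt_fed p C beta E gamma (\<lambda>i t k x. g i t k x \<omega>) w0 t k i) \<omega>))\<^sup>2)
        \<and> (\<integral>\<omega>. (norm (g i t k (wt_fed p C beta E gamma (\<lambda>i t k x. g i t k x \<omega>) w0 t k i) \<omega>))\<^sup>2 \<partial>M) \<le> G\<^sup>2"
  shows "\<forall>t i j. i < C \<longrightarrow> j < C \<longrightarrow>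
    (\<integral>\<omega>. (norm (u_fed p C beta E gamma (\<lambda>i t k x. g i t k x \<omega>) w0 t i
                 - u_fed p C beta E gamma (\<lambda>i t k x. g i t k x \<omega>) w0 t j))\<^sup>2 \<partial>M)
      \<le> (if t \<ge> 1 then 4 * (gamma (t - 1))\<^sup>2 * (real E)\<^sup>2 * G\<^sup>2 else 0)"
  proof (intro allI impI)
  fix t i j assume i: "i < C" and j: "j < C"
  show "(\<integral>\<omega>. (norm (u_fed p C beta E gamma (\<lambda>i t k x. g i t k x \<omega>) w0 t i
                 - u_fed p C beta E gamma (\<lambda>i t k x. g i t k x \<omega>) w0 t j))\<^sup>2 \<partial>M)
      \<le> (if t \<ge> 1 then 4 * (gamma (t - 1))\<^sup>2 * (real E)\<^sup>2 * G\<^sup>2 else 0)"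
  proof (cases "t \<ge> 1")
    case False
    then show ?thesis by (simp add: u_fed_def)
  next
    case True
    define s where "s = t - 1"
    have ts: "t = Suc s" using True by (simp add: s_def)
    define gk where "gk n k \<omega> = g n s k (wt_fed p C beta E gamma (\<lambda>i t k x. g i t k x \<omega>) w0 s k n) \<omega>" for n k \<omega>
    define Q where "Q n \<omega> = (\<Sum>k<E. (norm (gk n k \<omega>))\<^sup>2)" for n \<omega>
    define h where "h \<omega> = 2 * ((1 / pbar p C i) * (\<Sum>n<C. p i n * ((gamma s)\<^sup>2 * real E * Q n \<omega>)))
        + 2 * ((1 / pbar p C j) * (\<Sum>n<C. p j n * ((gamma s)\<^sup>2 * real E * Q n \<omega>)))" for \<omega>
    define f where "f \<omega> = (norm (u_fed p C beta E gamma (\<lambda>i t k x. g i t k x \<omega>) w0 t i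
                 - u_fed p C beta E gamma (\<lambda>i t k x. g i t k x \<omega>) w0 t j))\<^sup>2" for \<omega>
    have pw: "f \<omega> \<le> h \<omega>" for \<omega>
    proof -
      let ?G = "\<lambda>i t k x. g i t k x \<omega>"
      let ?W = "wbar_fed p C beta E gamma ?G w0 s"
      let ?X = "last_iters p C beta E gamma ?G w0 s"
      have X: "?X n - ?W = - (gamma s *\<^sub>R (\<Sum>k<E. gk n k \<omega>))" for n
        unfolding last_iters_eq by (subst local_w_closed) (simp add: gk_def wt_fed_def w_fed_def)
      have Xn: "(norm (?X n - ?W))\<^sup>2 \<le> (gamma s)\<^sup>2 * real E * Q n \<omega>" for n
      proof -
        have "(norm (?X n - ?W))\<^sup>2 = (gamma s)\<^sup>2 * (norm (\<Sum>k<E. gk n k \<omega>))\<^sup>2"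
          by (simp add: X power_mult_distrib)
        also have "\<dots> \<le> (gamma s)\<^sup>2 * (\<Sum>k<E. norm (gk n k \<omega>))\<^sup>2"
          by (intro mult_left_mono power_mono norm_sum) auto
        also have "\<dots> \<le> (gamma s)\<^sup>2 * (real E * Q n \<omega>)"
          using sum_squared_le_sum_of_squares[of "\<lambda>k. norm (gk n k \<omega>)" "{..<E}"]
          by (intro mult_left_mono) (auto simp: Q_def mult.commute)
        finally show ?thesis by simp
      qed
      have u: "u_fed p C beta E gamma ?G w0 t l = anchor p C ?X l" for l
        by (simp add: u_fed_def ts)
      have ai: "(norm (anchor p C ?X l - ?W))\<^sup>2
          \<le> (1 / pbar p C l) * (\<Sum>n<C. p l n * ((gamma s)\<^sup>2 * real E * Q n \<omega>))" if l: "l < C" for l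
      proof -
        have "(norm (anchor p C ?X l - ?W))\<^sup>2 \<le> (1 / pbar p C l) * (\<Sum>n<C. p l n * (norm (?X n - ?W))\<^sup>2)"
          using l p_pos p_nonneg by (intro anchor_norm) auto
        also have "\<dots> \<le> (1 / pbar p C l) * (\<Sum>n<C. p l n * ((gamma s)\<^sup>2 * real E * Q n \<omega>))"
          using l p_pos p_nonneg Xn
          by (intro mult_left_mono sum_mono) (auto intro: less_imp_le)
        finally show ?thesis .
      qed
      show ?thesis
        unfolding f_def h_def u
        using norm_diff_sq2[of "anchor p C ?X i" "anchor p C ?X j" ?W] ai[OF i] ai[OF j]
        by linarith
    qed
    interpret prob_space M by (rule M)
    have Qi: "integrable M (Q n) \<and> integral\<^sup>L M (Q n) \<le> real E * G\<^sup>2" if n: "n < C" for n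
    proof -
      have gi: "integrable M (\<lambda>\<omega>. (norm (gk n k \<omega>))\<^sup>2) \<and> integral\<^sup>L M (\<lambda>\<omega>. (norm (gk n k \<omega>))\<^sup>2) \<le> G\<^sup>2"
        if "k < E" for k
        using second[OF n that, of s] unfolding gk_def by simp
      have int: "integrable M (Q n)"
        unfolding Q_def[abs_def] by (rule Bochner_Integration.integrable_sum) (use gi in auto)
      have "integral\<^sup>L M (Q n) = (\<Sum>k<E. integral\<^sup>L M (\<lambda>\<omega>. (norm (gk n k \<omega>))\<^sup>2))"
        unfolding Q_def[abs_def] by (rule Bochner_Integration.integral_sum) (use gi in auto)
      also have "\<dots> \<le> (\<Sum>k<E. G\<^sup>2)"
        using gi by (intro sum_mono) auto
      finally show ?thesis using int by simp
    qed
    have hl: "integrable M (\<lambda>\<omega>. (1 / pbar p C l) * (\<Sum>n<C. p l n * ((gamma s)\<^sup>2 * real E * Q n \<omega>)))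
        \<and> integral\<^sup>L M (\<lambda>\<omega>. (1 / pbar p C l) * (\<Sum>n<C. p l n * ((gamma s)\<^sup>2 * real E * Q n \<omega>)))
          \<le> (gamma s)\<^sup>2 * (real E)\<^sup>2 * G\<^sup>2" if l: "l < C" for l
    proof -
      have int: "integrable M (\<lambda>\<omega>. (1 / pbar p C l) * (\<Sum>n<C. p l n * ((gamma s)\<^sup>2 * real E * Q n \<omega>)))"
        using Qi by (intro integrable_mult_right Bochner_Integration.integrable_sum) auto
      have "integral\<^sup>L M (\<lambda>\<omega>. (1 / pbar p C l) * (\<Sum>n<C. p l n * ((gamma s)\<^sup>2 * real E * Q n \<omega>)))
          = (1 / pbar p C l) * (\<Sum>n<C. p l n * ((gamma s)\<^sup>2 * real E * integral\<^sup>L M (Q n)))"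
        using Qi by (simp add: Bochner_Integration.integral_sum integral_mult_right_zero)
      also have "\<dots> \<le> (1 / pbar p C l) * (\<Sum>n<C. p l n * ((gamma s)\<^sup>2 * real E * (real E * G\<^sup>2)))"
        using Qi l p_pos p_nonneg
        by (intro mult_left_mono sum_mono) (auto intro: less_imp_le)
      also have "\<dots> = (1 / pbar p C l) * (pbar p C l * ((gamma s)\<^sup>2 * real E * (real E * G\<^sup>2)))"
        by (simp only: pbar_def sum_distrib_right)
      also have "\<dots> = (gamma s)\<^sup>2 * (real E)\<^sup>2 * G\<^sup>2"
        using p_pos[OF l] by (simp add: power2_eq_square)
      finally show ?thesis using int by simp
    qed
    define A where "A l \<omega> = (1 / pbar p C l) * (\<Sum>n<C. p l n * ((gamma s)\<^sup>2 * real E * Q n \<omega>))" for l \<omega>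
    have hA: "integrable M (A l)" "integral\<^sup>L M (A l) \<le> (gamma s)\<^sup>2 * (real E)\<^sup>2 * G\<^sup>2"
      if "l < C" for l
      using hl[OF that] unfolding A_def[abs_def] by auto
    have hdef: "h = (\<lambda>\<omega>. 2 * A i \<omega> + 2 * A j \<omega>)"
      unfolding h_def[abs_def] A_def[abs_def] by simp
    have hint1: "integrable M h"
      unfolding hdef
      by (intro Bochner_Integration.integrable_add integrable_mult_right hA i j)
    have "integral\<^sup>L M h = 2 * integral\<^sup>L M (A i) + 2 * integral\<^sup>L M (A j)"
      unfolding hdef
      by (subst Bochner_Integration.integral_add)
         (auto intro!: integrable_mult_right hA i j)
    then have hint2: "integral\<^sup>L M h \<le> 4 * (gamma s)\<^sup>2 * (real E)\<^sup>2 * G\<^sup>2"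
      using hA(2)[OF i] hA(2)[OF j] by linarith
    note hint = hint1 hint2
    have "integral\<^sup>L M f \<le> 4 * (gamma s)\<^sup>2 * (real E)\<^sup>2 * G\<^sup>2"
    proof (cases "integrable M f")
      case True
      have "integral\<^sup>L M f \<le> integral\<^sup>L M h"
        using True hint pw by (intro integral_mono) auto
      then show ?thesis using hint by linarith
    next
      case False
      then show ?thesis by (simp add: not_integrable_integral_eq)
    qed
    then show ?thesis using True unfolding f_def s_def by simp
  qed
qed

end
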